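(* Let $\vartheta\in(0,1)$, let $c,r,\alpha,\beta$ be positive integers, and consider the single-agent trust model described in the context. Suppose $\vartheta>\theta_{\rm crit}:=c/(c+r)$. Then almost surely the agent either (A) quits at some finite time, i.e. $\tau<\infty$, with $A_t=1$ for all $t<\tau$ and $A_t=0$ for all $t\ge\tau$; or (B) places trust forever and learns the truth, i.e. $A_t=1$ for all $t=1,2,\dots$ and $\lim_{t\to\infty}\hat\vartheta_t=\vartheta$. In particular $\mathbb{P}(\hat\vartheta_t\not\to\vartheta \text{ and } \tau=\infty)=0$.
   Context: Single-agent trust model: $\vartheta$ is the institution's true trustworthiness; $(X_t)_{t\in\mathbb{N}}$ are i.i.d. with $\mathbb{P}(X_t=1)=\vartheta$, $\mathbb{P}(X_t=0)=1-\vartheta$. The agent has actions $A_t\in\{0,1\}$ and observes $X_t$ only in rounds with $A_t=1$. Let $\hat S_t=\sum_{s=1}^t X_s\mathbf{1}_{\{A_s=1\}}$, $\hat F_t=\sum_{s=1}^t(1-X_s)\mathbf{1}_{\{A_s=1\}}$, and $\hat\vartheta_t=\frac{\alpha+\hat S_t}{\alpha+\beta+\hat S_t+\hat F_t}$ (posterior mean under a Beta$(\alpha,\beta)$ prior). The agent acts myopically: $A_t=1$ if $r\hat\vartheta_n-c(1-\hat\vartheta_n)\ge 0$ for all $n\in\{0,\dots,t-1\}$, and $A_t=0$ otherwise. The quitting time is $\tau:=\inf\{t\in\mathbb{N}\cup\{\infty\}: r\hat\vartheta_t-c(1-\hat\vartheta_t)<0\}$. *)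

theory Defs
  imports "HOL-Probability.Probability"
begin

text \<open>Single-agent trust model. Outcomes X t w :: bool (True = 1), actions A t w :: bool
  (True = 1), rounds t = 1,2,...\<close>

definition Shat :: "(nat \<Rightarrow> 'a \<Rightarrow> bool) \<Rightarrow> (nat \<Rightarrow> 'a \<Rightarrow> bool) \<Rightarrow> nat \<Rightarrow> 'a \<Rightarrow> real" where
  "Shat X A t w = (\<Sum>s\<in>{1..t}. if X s w \<and> A s w then 1 else 0)"

definition Fhat :: "(nat \<Rightarrow> 'a \<Rightarrow> bool) \<Rightarrow> (nat \<Rightarrow> 'a \<Rightarrow> bool) \<Rightarrow> nat \<Rightarrow> 'a \<Rightarrow> real" where
  "Fhat X A t w = (\<Sum>s\<in>{1..t}. if \<not> X s w \<and> A s w then 1 else 0)"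

definition theta_hat :: "real \<Rightarrow> real \<Rightarrow> (nat \<Rightarrow> 'a \<Rightarrow> bool) \<Rightarrow> (nat \<Rightarrow> 'a \<Rightarrow> bool) \<Rightarrow> nat \<Rightarrow> 'a \<Rightarrow> real" where
  "theta_hat \<alpha> \<beta> X A t w =
     (\<alpha> + Shat X A t w) / (\<alpha> + \<beta> + Shat X A t w + Fhat X A t w)"

definition quit_time :: "real \<Rightarrow> real \<Rightarrow> (nat \<Rightarrow> 'a \<Rightarrow> real) \<Rightarrow> 'a \<Rightarrow> enat" where
  "quit_time r c th w =
     (if \<exists>t. r * th t w - c * (1 - th t w) < 0
      then enat (LEAST t. r * th t w - c * (1 - th t w) < 0) else \<infinity>)"

end

theory Submission
  imports Defs
begin

lemma (in prob_space) hoeff_bern: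
  fixes X :: "nat \<Rightarrow> 'a \<Rightarrow> bool"
  assumes rv: "\<And>t. X t \<in> measurable M (count_space UNIV)"
    and indep: "indep_vars (\<lambda>_. count_space UNIV) X UNIV"
    and bern: "\<And>t. prob {w \<in> space M. X t w} = theta"
    and n: "n \<ge> 1" and e: "e \<ge> 0"
  shows "prob {w\<in>space M. \<bar>(\<Sum>i\<in>{1..n}. (if X i w then 1 else 0::real)) - real n * theta\<bar> \<ge> real n * e}
          \<le> 2 * exp (-2 * e\<^sup>2) ^ n"
proof -
  define Y where "Y = (\<lambda>i w. if X i w then 1 else (0::real))"
  have indY: "indep_vars (\<lambda>_. borel) Y {1..n}"
    unfolding Y_def
    by (rule indep_vars_compose2[where X=X and M'="\<lambda>_. count_space UNIV" and Y="\<lambda>_ x. if x then 1 else 0", simplified])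
       (rule indep_vars_subset[OF indep], auto)
  have EY: "expectation (Y i) = theta" for i
  proof -
    have "X i -` {True} \<inter> space M \<in> sets M" by (rule measurable_sets[OF rv]) auto
    moreover have "X i -` {True} \<inter> space M = {w \<in> space M. X i w}" by auto
    ultimately have ev: "{w \<in> space M. X i w} \<in> events" by simp
    have "expectation (Y i) = expectation (\<lambda>w. indicator {w \<in> space M. X i w} w)"
      by (rule Bochner_Integration.integral_cong) (auto simp: Y_def indicator_def)
    also have "\<dots> = theta" using bern[of i] ev
      by simp
    finally show ?thesis .
  qed
  interpret H: Hoeffding_ineq M "{1..n}" Y "\<lambda>_. 0" "\<lambda>_. 1" "real n * theta"
  proof unfold_locales
    show "finite {1..n}" by simp
    show "indep_vars (\<lambda>_. borel) Y {1..n}" by (rule indY)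
    show "AE x in M. Y i x \<in> {0..1}" for i by (simp add: Y_def)
    show "real n * theta \<equiv> \<Sum>i\<in>{1..n}. expectation (Y i)" by (simp add: EY)
  qed
  have "prob {w\<in>space M. \<bar>(\<Sum>i\<in>{1..n}. Y i w) - real n * theta\<bar> \<ge> real n * e}
        \<le> 2 * exp (-2 * (real n * e)\<^sup>2 / (\<Sum>i\<in>{1..n}. (1 - 0)\<^sup>2))"
    using n e by (intro H.Hoeffding_ineq_abs_ge) auto
  also have "exp (-2 * (real n * e)\<^sup>2 / (\<Sum>i\<in>{1..n}. (1 - 0)\<^sup>2)) = exp (real n * (-2 * e\<^sup>2))"
    using n by (simp add: power2_eq_square)
  also have "\<dots> = exp (-2 * e\<^sup>2) ^ n"
    by (rule exp_of_nat_mult)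
  finally show ?thesis unfolding Y_def .
qed

lemma (in prob_space) slln_bern:
  fixes X :: "nat \<Rightarrow> 'a \<Rightarrow> bool"
  assumes rv: "\<And>t. X t \<in> measurable M (count_space UNIV)"
    and indep: "indep_vars (\<lambda>_. count_space UNIV) X UNIV"
    and bern: "\<And>t. prob {w \<in> space M. X t w} = theta"
  shows "AE w in M. (\<lambda>n. (\<Sum>i\<in>{1..n}. (if X i w then 1 else 0::real)) / real n) \<longlonglongrightarrow> theta"
proof -
  define S where "S n w = (\<Sum>i\<in>{1..n}. (if X i w then 1 else 0::real))" for n w
  have mi: "(\<lambda>w. if X i w then 1 else 0::real) \<in> borel_measurable M" for i
    using measurable_compose[OF rv[of i], of "\<lambda>x. if x then 1 else 0::real" borel] by simp
  have meas: "S n \<in> borel_measurable M" for n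
    unfolding S_def by (intro borel_measurable_sum mi)
  define A where "A k n = {w\<in>space M. real n * (1 / Suc k) \<le> \<bar>S n w - real n * theta\<bar>}" for k n
  have AEk: "AE w in M. eventually (\<lambda>n. w \<in> space M - A k n) sequentially" for k
  proof (rule borel_cantelli_AE1)
    show "A k n \<in> sets M" for n unfolding A_def using meas[of n] by measurable
    show "emeasure M (A k n) < \<infinity>" for n by (simp add: emeasure_eq_measure)
    define q where "q = exp (-2 * (1 / real (Suc k))\<^sup>2)"
    have q: "norm q < 1" unfolding q_def by simp
    have "summable (\<lambda>n. 2 * q ^ n)"
      by (intro summable_mult summable_geometric q)
    then show "summable (\<lambda>n. measure M (A k n))"
    proof (rule summable_comparison_test'[where N=1])
      fix n :: nat assume "1 \<le> n"
      then show "norm (measure M (A k n)) \<le> 2 * q ^ n"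
        unfolding A_def S_def q_def using hoeff_bern[OF rv indep bern, of n "1 / real (Suc k)"]
        by simp
    qed
  qed
  then have "AE w in M. \<forall>k. eventually (\<lambda>n. w \<in> space M - A k n) sequentially"
    by (simp add: AE_all_countable)
  then show ?thesis
  proof (rule eventually_mono)
    fix w assume H: "\<forall>k. eventually (\<lambda>n. w \<in> space M - A k n) sequentially"
    show "(\<lambda>n. (\<Sum>i\<in>{1..n}. (if X i w then 1 else 0::real)) / real n) \<longlonglongrightarrow> theta"
    proof (rule LIMSEQ_I)
      fix r :: real assume r: "0 < r"
      obtain k where k: "inverse (real (Suc k)) < r" using reals_Archimedean[OF r] by blast
      obtain N where N: "\<And>n. n \<ge> N \<Longrightarrow> w \<in> space M - A k n"
        using H[rule_format, of k] unfolding eventually_sequentially by blast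
      show "\<exists>no. \<forall>n\<ge>no. norm ((\<Sum>i\<in>{1..n}. (if X i w then 1 else 0::real)) / real n - theta) < r"
      proof (intro exI allI impI)
        fix n assume n: "max N 1 \<le> n"
        then have "w \<notin> A k n" using N by auto
        moreover have "w \<in> space M" using N[of N] by auto
        ultimately have lt: "\<bar>S n w - real n * theta\<bar> < real n * (1 / Suc k)"
          unfolding A_def by auto
        have np: "real n > 0" using n by auto
        have "norm (S n w / real n - theta) = \<bar>S n w - real n * theta\<bar> / real n"
          using np by (simp add: field_simps)
        also have "\<dots> < 1 / Suc k" using lt np by (simp add: field_simps)
        also have "\<dots> < r" using k by (simp add: field_simps)
        finally show "norm ((\<Sum>i\<in>{1..n}. (if X i w then 1 else 0::real)) / real n - theta) < r"
          unfolding S_def .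
      qed
    qed
  qed
qed

lemma det_part:
  fixes X A :: "nat \<Rightarrow> 'a \<Rightarrow> bool" and a b rr cc theta :: real and w :: 'a
  assumes A_def: "\<And>t. 1 \<le> t \<Longrightarrow> A t w \<longleftrightarrow>
         (\<forall>n\<in>{0..t-1}. rr * theta_hat a b X A n w - cc * (1 - theta_hat a b X A n w) \<ge> 0)"
    and ab: "0 \<le> a" "0 \<le> b"
    and conv: "(\<lambda>n. (\<Sum>i\<in>{1..n}. (if X i w then 1 else 0::real)) / real n) \<longlonglongrightarrow> theta"
  shows "(quit_time rr cc (theta_hat a b X A) w < \<infinity> \<and>
              (\<forall>t\<ge>1. enat t \<le> quit_time rr cc (theta_hat a b X A) w \<longrightarrow> A t w) \<and>
              (\<forall>t\<ge>1. enat t > quit_time rr cc (theta_hat a b X A) w \<longrightarrow> \<not> A t w))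
         \<or> ((\<forall>t\<ge>1. A t w) \<and> (\<lambda>t. theta_hat a b X A t w) \<longlonglongrightarrow> theta)"
proof (cases "\<exists>t. rr * theta_hat a b X A t w - cc * (1 - theta_hat a b X A t w) < 0")
  case True
  define k where "k = (LEAST t. rr * theta_hat a b X A t w - cc * (1 - theta_hat a b X A t w) < 0)"
  have qt: "quit_time rr cc (theta_hat a b X A) w = enat k"
    unfolding quit_time_def k_def by (rule if_P[OF True])
  have Pk: "rr * theta_hat a b X A k w - cc * (1 - theta_hat a b X A k w) < 0"
    using True unfolding k_def by (rule LeastI_ex)
  have nP: "n < k \<Longrightarrow> \<not> rr * theta_hat a b X A n w - cc * (1 - theta_hat a b X A n w) < 0" for n
    unfolding k_def by (rule not_less_Least)
  have "\<forall>t\<ge>1. enat t \<le> enat k \<longrightarrow> A t w"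
  proof (intro allI impI)
    fix t :: nat assume t: "1 \<le> t" "enat t \<le> enat k"
    show "A t w" unfolding A_def[OF t(1)]
    proof
      fix n assume "n \<in> {0..t-1}"
      then have "n < k" using t by auto
      then show "rr * theta_hat a b X A n w - cc * (1 - theta_hat a b X A n w) \<ge> 0"
        using nP[of n] by linarith
    qed
  qed
  moreover have "\<forall>t\<ge>1. enat t > enat k \<longrightarrow> \<not> A t w"
  proof (intro allI impI)
    fix t :: nat assume t: "1 \<le> t" "enat t > enat k"
    then have "k \<in> {0..t-1}" by auto
    then have "\<not> rr * theta_hat a b X A k w - cc * (1 - theta_hat a b X A k w) \<ge> 0" using Pk by linarith
    then show "\<not> A t w" unfolding A_def[OF t(1)] using \<open>k \<in> {0..t-1}\<close> by blast
  qed
  ultimately show ?thesis unfolding qt by (intro disjI1 conjI) auto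
next
  case False
  have allA: "\<forall>t\<ge>1. A t w"
  proof (intro allI impI)
    fix t :: nat assume t: "1 \<le> t"
    show "A t w" unfolding A_def[OF t]
    proof
      fix n assume "n \<in> {0..t-1}"
      have "\<not> rr * theta_hat a b X A n w - cc * (1 - theta_hat a b X A n w) < 0" using False by blast
      then show "rr * theta_hat a b X A n w - cc * (1 - theta_hat a b X A n w) \<ge> 0" by linarith
    qed
  qed
  have S: "Shat X A t w = (\<Sum>i\<in>{1..t}. (if X i w then 1 else 0::real))" for t
    unfolding Shat_def using allA by (intro sum.cong) auto
  have SF: "Shat X A t w + Fhat X A t w = real t" for t
  proof -
    have "Shat X A t w + Fhat X A t w = (\<Sum>i\<in>{1..t}. 1::real)"
      unfolding Shat_def Fhat_def sum.distrib[symmetric] using allA by (intro sum.cong) auto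
    then show ?thesis by simp
  qed
  define s where "s n = (\<Sum>i\<in>{1..n}. (if X i w then 1 else 0::real)) / real n" for n
  have lim: "(\<lambda>n. (a / real n + s n) / ((a + b) / real n + 1)) \<longlonglongrightarrow> (0 + theta) / (0 + 1)"
    unfolding s_def by (intro tendsto_intros conv) auto
  have ev: "eventually (\<lambda>n. (a / real n + s n) / ((a + b) / real n + 1) = theta_hat a b X A n w) sequentially"
    unfolding eventually_sequentially
  proof (intro exI allI impI)
    fix n :: nat assume n: "1 \<le> n"
    have e: "a + b + Shat X A n w + Fhat X A n w = a + b + real n" using SF[of n] by simp
    have pos: "a + b + real n > 0" using n ab by simp
    define Sv where "Sv = (\<Sum>i\<in>{1..n}. (if X i w then 1 else 0::real))"
    have np: "real n \<noteq> 0" using n by simp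
    have 1: "a / real n + s n = (a + Sv) / real n" unfolding s_def Sv_def by (simp add: add_divide_distrib)
    have 2: "(a + b) / real n + 1 = (a + b + real n) / real n" using np by (simp add: field_simps)
    have 3: "((a + Sv) / real n) / ((a + b + real n) / real n) = (a + Sv) / (a + b + real n)"
      using np by simp
    have 4: "theta_hat a b X A n w = (a + Sv) / (a + b + real n)"
      unfolding theta_hat_def e Sv_def S[symmetric] ..
    show "(a / real n + s n) / ((a + b) / real n + 1) = theta_hat a b X A n w"
      unfolding 1 2 3 4 ..
  qed
  have "(\<lambda>t. theta_hat a b X A t w) \<longlonglongrightarrow> theta"
    using Lim_transform_eventually[OF lim ev] by simp
  then show ?thesis using allA by blast
qed

theorem lemma3p2:
  fixes M :: "'a measure" and X :: "nat \<Rightarrow> 'a \<Rightarrow> bool" and A :: "nat \<Rightarrow> 'a \<Rightarrow> bool"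
    and theta :: real and c r \<alpha> \<beta> :: nat
  assumes "prob_space M"
    and rv: "\<And>t. X t \<in> measurable M (count_space UNIV)"
    and indep: "prob_space.indep_vars M (\<lambda>_. count_space UNIV) X UNIV"
    and bern: "\<And>t. measure M {w \<in> space M. X t w} = theta"
    and "0 < theta" "theta < 1"
    and "0 < c" "0 < r" "0 < \<alpha>" "0 < \<beta>"
    and A_def: "\<And>t w. 1 \<le> t \<Longrightarrow> A t w \<longleftrightarrow>
         (\<forall>n\<in>{0..t-1}. real r * theta_hat \<alpha> \<beta> X A n w - real c * (1 - theta_hat \<alpha> \<beta> X A n w) \<ge> 0)"
    and crit: "theta > real c / (real c + real r)"
  shows "(AE w in M.
           (quit_time r c (theta_hat \<alpha> \<beta> X A) w < \<infinity> \<and>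
              (\<forall>t\<ge>1. enat t \<le> quit_time r c (theta_hat \<alpha> \<beta> X A) w \<longrightarrow> A t w) \<and>
              (\<forall>t\<ge>1. enat t > quit_time r c (theta_hat \<alpha> \<beta> X A) w \<longrightarrow> \<not> A t w))
         \<or> ((\<forall>t\<ge>1. A t w) \<and> (\<lambda>t. theta_hat \<alpha> \<beta> X A t w) \<longlonglongrightarrow> theta))
       \<and> measure M {w \<in> space M. \<not> ((\<lambda>t. theta_hat \<alpha> \<beta> X A t w) \<longlonglongrightarrow> theta)
                       \<and> quit_time r c (theta_hat \<alpha> \<beta> X A) w = \<infinity>} = 0"
proof -
  interpret P: prob_space M by fact
  have slln: "AE w in M. (\<lambda>n. (\<Sum>i\<in>{1..n}. (if X i w then 1 else 0::real)) / real n) \<longlonglongrightarrow> theta"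
    by (rule P.slln_bern[OF rv indep bern])
  let ?Q = "\<lambda>w. (quit_time r c (theta_hat \<alpha> \<beta> X A) w < \<infinity> \<and>
              (\<forall>t\<ge>1. enat t \<le> quit_time r c (theta_hat \<alpha> \<beta> X A) w \<longrightarrow> A t w) \<and>
              (\<forall>t\<ge>1. enat t > quit_time r c (theta_hat \<alpha> \<beta> X A) w \<longrightarrow> \<not> A t w))
         \<or> ((\<forall>t\<ge>1. A t w) \<and> (\<lambda>t. theta_hat \<alpha> \<beta> X A t w) \<longlonglongrightarrow> theta)"
  have Q: "?Q w" if "(\<lambda>n. (\<Sum>i\<in>{1..n}. (if X i w then 1 else 0::real)) / real n) \<longlonglongrightarrow> theta" for w
    by (rule det_part[OF A_def _ _ that]) auto
  have AEQ: "AE w in M. ?Q w"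
    using slln by (rule eventually_mono) (rule Q)
  moreover have "measure M {w \<in> space M. \<not> ((\<lambda>t. theta_hat \<alpha> \<beta> X A t w) \<longlonglongrightarrow> theta)
                       \<and> quit_time r c (theta_hat \<alpha> \<beta> X A) w = \<infinity>} = 0" (is "measure M ?B = 0")
  proof -
    from AEQ obtain N where N: "{w \<in> space M. \<not> ?Q w} \<subseteq> N" "emeasure M N = 0" "N \<in> sets M"
      by (rule AE_E)
    have sub: "?B \<subseteq> N"
    proof
      fix w assume w: "w \<in> ?B"
      then have "w \<in> space M" by blast
      moreover from w have "\<not> ?Q w" by simp
      ultimately show "w \<in> N" using N(1) by blast
    qed
    show ?thesis
    proof (cases "?B \<in> sets M")
      case True
      have "emeasure M ?B \<le> emeasure M N" by (rule emeasure_mono[OF sub N(3)])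
      then have "emeasure M ?B = 0" using N(2) by simp
      then show ?thesis by (simp add: measure_def)
    next
      case False
      then show ?thesis by (rule measure_notin_sets)
    qed
  qed
  ultimately show ?thesis by blast
qed

end
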